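(* Let $D$ be a finite-dimensional division $\mathbb{R}$-algebra, $n\ge 2$, and let $\mathbf{H}$ be an algebraic $\mathbb{R}$-group in the isogeny class of $\mathrm{SL}_{D^n}$ or $\mathrm{GL}_{D^n}$, with standard projective representation $\rho_{\mathrm{std}}:\mathbf{H}\to\mathrm{PGL}_{D^n}$. Let $h\in\mathbf{H}(\mathbb{R})$ be non-central. Then for every $p\in\mathbb{P}(D^n)$, the span of $\{\rho_{\mathrm{std}}(xhx^{-1})p: x\in\mathbf{H}(\mathbb{R})\}$ is the whole of $\mathbb{P}(D^n)$.
   Context: $D^n$ is viewed as a right $D$-module; $\mathrm{GL}_{D^n}$ ($\mathrm{SL}_{D^n}$) is the $\mathbb{R}$-group of $D$-linear automorphisms (of reduced norm $1$), $\mathrm{PGL}_{D^n}$ the quotient of $\mathrm{GL}_{D^n}$ by its center, and $\mathbb{P}(D^n)$ the set of $1$-dimensional right $D$-submodules; span means smallest $D$-subspace containing the points. The standard projective representation is the canonical morphism $\mathbf{H}\to\mathrm{PGL}_{D^n}$. *)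

theory Defs
  imports "HOL-Analysis.Analysis" "HOL-Algebra.Group"
begin

text \<open>D^n = 'd ^ 'n, viewed as a RIGHT D-module.\<close>

definition rscale :: "'d::real_div_algebra ^ 'n \<Rightarrow> 'd \<Rightarrow> 'd ^ 'n" where
  "rscale v c = (\<chi> i. v $ i * c)"

definition right_linear :: "('d::real_div_algebra ^ 'n \<Rightarrow> 'd ^ 'n) \<Rightarrow> bool" where
  "right_linear f \<longleftrightarrow> (\<forall>v w. f (v + w) = f v + f w) \<and> (\<forall>v c. f (rscale v c) = rscale (f v) c)"

definition GLD :: "('d::real_div_algebra ^ 'n \<Rightarrow> 'd ^ 'n) set" where
  "GLD = {f. right_linear f \<and> bij f}"

definition central_elem :: "'d::real_div_algebra \<Rightarrow> bool" where
  "central_elem c \<longleftrightarrow> (\<forall>d. c * d = d * c)"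

text \<open>Equality in PGL_{D^n}(R) = GL_{D^n}(R) modulo its centre Z(D)^*.\<close>
definition proj_equiv :: "('d::real_div_algebra ^ 'n \<Rightarrow> 'd ^ 'n) \<Rightarrow> ('d ^ 'n \<Rightarrow> 'd ^ 'n) \<Rightarrow> bool" where
  "proj_equiv f g \<longleftrightarrow> (\<exists>c. c \<noteq> 0 \<and> central_elem c \<and> (\<forall>v. f v = rscale (g v) c))"

definition dline :: "'d::real_div_algebra ^ 'n \<Rightarrow> ('d ^ 'n) set" where
  "dline v = {rscale v c | c. True}"

definition proj_points :: "(('d::real_div_algebra ^ 'n) set) set" where
  "proj_points = {dline v | v. v \<noteq> 0}"

definition pact :: "('d::real_div_algebra ^ 'n \<Rightarrow> 'd ^ 'n) \<Rightarrow> ('d ^ 'n) set \<Rightarrow> ('d ^ 'n) set" where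
  "pact f p = f ` p"

definition right_submodule :: "('d::real_div_algebra ^ 'n) set \<Rightarrow> bool" where
  "right_submodule S \<longleftrightarrow> 0 \<in> S \<and> (\<forall>v\<in>S. \<forall>w\<in>S. v + w \<in> S) \<and> (\<forall>v\<in>S. \<forall>c. rscale v c \<in> S)"

definition dspan :: "('d::real_div_algebra ^ 'n) set \<Rightarrow> ('d ^ 'n) set" where
  "dspan A = \<Inter>{S. right_submodule S \<and> A \<subseteq> S}"

definition proj_span :: "(('d::real_div_algebra ^ 'n) set) set \<Rightarrow> (('d ^ 'n) set) set" where
  "proj_span Q = {q \<in> proj_points. q \<subseteq> dspan (\<Union>Q)}"

text \<open>Transvections v |-> v + u phi(v) with phi a D-linear functional, phi(u) = 0.
  They generate SL_{D^n}(R) (elements of reduced norm 1).\<close>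
definition transvection :: "('d::real_div_algebra ^ 'n \<Rightarrow> 'd ^ 'n) \<Rightarrow> bool" where
  "transvection t \<longleftrightarrow> (\<exists>u \<phi>. (\<forall>v w. \<phi> (v + w) = \<phi> v + \<phi> w) \<and> (\<forall>v c. \<phi> (rscale v c) = \<phi> v * c)
      \<and> \<phi> u = 0 \<and> t = (\<lambda>v. v + rscale u (\<phi> v)))"

text \<open>Abstract rendering of "rho is the standard projective representation of a group H in
  the isogeny class of SL_{D^n} or GL_{D^n}", on real points: rho is a homomorphism
  H(R) -> PGL_{D^n}(R) (given by lifts to GL_{D^n}(R)), its kernel is central, and its image
  contains the image of SL_{D^n}(R) (generated by transvections).\<close>
definition std_proj_rep :: "('h, 'm) monoid_scheme \<Rightarrow> ('h \<Rightarrow> 'd::real_div_algebra ^ 'n \<Rightarrow> 'd ^ 'n) \<Rightarrow> bool" where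
  "std_proj_rep H \<rho> \<longleftrightarrow>
     (\<forall>x\<in>carrier H. \<rho> x \<in> GLD)
   \<and> (\<forall>x\<in>carrier H. \<forall>y\<in>carrier H. proj_equiv (\<rho> (x \<otimes>\<^bsub>H\<^esub> y)) (\<rho> x \<circ> \<rho> y))
   \<and> (\<forall>x\<in>carrier H. proj_equiv (\<rho> x) id \<longrightarrow> (\<forall>y\<in>carrier H. x \<otimes>\<^bsub>H\<^esub> y = y \<otimes>\<^bsub>H\<^esub> x))
   \<and> (\<forall>t. transvection t \<longrightarrow> (\<exists>x\<in>carrier H. proj_equiv (\<rho> x) t))"

end

theory Submission
  imports Defs
begin

lemma rscale_comp[simp]: "rscale v c $ i = v $ i * c"
  by (simp add: rscale_def)

lemma rscale_rscale[simp]: "rscale (rscale v a) b = rscale v (a * b)"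
  by (simp add: vec_eq_iff mult.assoc)

lemma rscale_one[simp]: "rscale v 1 = v"
  by (simp add: vec_eq_iff)

lemma rscale_zero[simp]: "rscale v 0 = 0" "rscale 0 c = 0"
  by (simp_all add: vec_eq_iff)

lemma rscale_add: "rscale (v + w) c = rscale v c + rscale w c"
  by (simp add: vec_eq_iff distrib_right)

lemma rscale_eq0: "rscale v c = (0::'d::real_div_algebra^'n) \<Longrightarrow> v = 0 \<or> c = 0"
  by (auto simp: vec_eq_iff)

lemma rscale_inv: "(c::'d::real_div_algebra) \<noteq> 0 \<Longrightarrow> rscale (rscale v c) (inverse c) = v"
  by simp

lemma rl_zero: "right_linear f \<Longrightarrow> f 0 = 0"
  unfolding right_linear_def by (metis add_cancel_right_right add_0)

lemma central_mult: "central_elem a \<Longrightarrow> central_elem b \<Longrightarrow> central_elem (a * b)"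
  unfolding central_elem_def by (metis mult.assoc)

lemma central_inverse:
  fixes c :: "'d::real_div_algebra"
  assumes "central_elem c" "c \<noteq> 0" shows "central_elem (inverse c)"
  unfolding central_elem_def
proof
  fix d
  have "c * d = d * c" using assms unfolding central_elem_def by auto
  have "inverse c * d = inverse c * d * (c * inverse c)" using assms(2) by simp
  also have "\<dots> = inverse c * (d * c) * inverse c" by (simp add: mult.assoc)
  also have "\<dots> = inverse c * (c * d) * inverse c" using \<open>c * d = d * c\<close> by simp
  also have "\<dots> = d * inverse c" using assms(2) by (simp add: mult.assoc[symmetric])
  finally show "inverse c * d = d * inverse c" .
qed

lemma submod_diff: "right_submodule S \<Longrightarrow> v \<in> S \<Longrightarrow> w \<in> S \<Longrightarrow> v - w \<in> S"
proof -
  assume S: "right_submodule S" "v \<in> S" "w \<in> S"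
  have "rscale w (-1) = - w" by (simp add: vec_eq_iff)
  hence "- w \<in> S" using S unfolding right_submodule_def by metis
  thus ?thesis using S unfolding right_submodule_def by (metis diff_conv_add_uminus)
qed

lemma submod_scale_back:
  assumes "right_submodule S" "rscale v (c::'d::real_div_algebra) \<in> S" "c \<noteq> 0"
  shows "v \<in> S"
  using assms unfolding right_submodule_def by (metis rscale_inv)

lemma dspan_submod: "right_submodule (dspan A)"
  unfolding dspan_def right_submodule_def by auto

lemma dspan_sub: "A \<subseteq> dspan A"
  unfolding dspan_def by auto

lemma func_diff:
  fixes a b :: "'x::ab_group_add"
  assumes "\<forall>a b. \<phi> (a + b) = \<phi> a + (\<phi> b::'d::real_div_algebra)"
  shows "\<phi> (a - b) = \<phi> a - \<phi> b"
proof -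
  have "\<phi> (a - b + b) = \<phi> (a - b) + \<phi> b" using assms by blast
  hence "\<phi> a = \<phi> (a - b) + \<phi> b" by simp
  thus ?thesis by (simp add: algebra_simps)
qed

lemma func_exists:
  fixes v z :: "'d::real_div_algebra ^ 'n"
  assumes "v \<noteq> 0" "z \<notin> dline v"
  shows "\<exists>\<phi>. (\<forall>a b. \<phi> (a+b) = \<phi> a + \<phi> b) \<and> (\<forall>a c. \<phi> (rscale a c) = \<phi> a * c) \<and> \<phi> v = 0 \<and> \<phi> z = 1"
proof -
  obtain j where vj: "v $ j \<noteq> 0" using assms(1) by (auto simp: vec_eq_iff)
  define m where "m = inverse (v $ j) * z $ j"
  define z' where "z' = z - rscale v m"
  have z'j: "z' $ j = 0" using vj unfolding z'_def m_def
    by (simp add: mult.assoc[symmetric])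
  have "z' \<noteq> 0"
  proof
    assume "z' = 0"
    hence "z = rscale v m" unfolding z'_def by simp
    thus False using assms(2) unfolding dline_def by auto
  qed
  then obtain k where zk: "z' $ k \<noteq> 0" by (auto simp: vec_eq_iff)
  define b where "b = inverse (z' $ k)"
  define c where "c = - (b * v $ k * inverse (v $ j))"
  define \<phi> where "\<phi> = (\<lambda>y::'d^'n. b * y $ k + c * y $ j)"
  have add: "\<forall>a b. \<phi> (a+b) = \<phi> a + \<phi> b" unfolding \<phi>_def by (simp add: algebra_simps)
  have hom: "\<forall>a d. \<phi> (rscale a d) = \<phi> a * d" unfolding \<phi>_def by (simp add: algebra_simps)
  have pv: "\<phi> v = 0" unfolding \<phi>_def c_def using vj
    by (simp add: mult.assoc)
  have pz': "\<phi> z' = 1" unfolding \<phi>_def b_def using z'j zk by simp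
  have "z = z' + rscale v m" unfolding z'_def by simp
  hence "\<phi> z = \<phi> z' + \<phi> v * m" using add hom by metis
  hence "\<phi> z = 1" using pv pz' by simp
  thus ?thesis using add hom pv by blast
qed

lemma eig_equal:
  fixes A :: "'d::real_div_algebra^'n \<Rightarrow> 'd^'n"
  assumes rl: "right_linear A"
    and eig: "\<And>w. w \<noteq> 0 \<Longrightarrow> \<exists>c. A w = rscale w c"
    and w1: "w1 \<noteq> 0" and w2: "w2 \<notin> dline w1"
    and a: "A w1 = rscale w1 a" and b: "A w2 = rscale w2 b"
  shows "a = b"
proof -
  have "w1 + w2 \<noteq> 0"
  proof
    assume "w1 + w2 = 0"
    hence "w2 = rscale w1 (-1)" by (simp add: vec_eq_iff add_eq_0_iff)
    thus False using w2 unfolding dline_def by auto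
  qed
  then obtain \<mu> where mu: "A (w1 + w2) = rscale (w1 + w2) \<mu>" using eig by blast
  have "A (w1 + w2) = A w1 + A w2" using rl unfolding right_linear_def by blast
  hence eq: "rscale w1 (\<mu> - a) + rscale w2 (\<mu> - b) = 0" using mu a b
    by (simp add: vec_eq_iff algebra_simps)
  have mb: "\<mu> = b"
  proof (rule ccontr)
    assume ne: "\<mu> \<noteq> b"
    have "rscale w2 (\<mu> - b) = - rscale w1 (\<mu> - a)" using eq
      by (simp only: add_eq_0_iff)
    also have "\<dots> = rscale w1 (-(\<mu> - a))" by (simp add: vec_eq_iff del: minus_diff_eq)
    finally have "rscale w2 (\<mu> - b) = rscale w1 (-(\<mu> - a))" .
    hence "rscale (rscale w2 (\<mu> - b)) (inverse (\<mu> - b)) = rscale w1 (-(\<mu> - a) * inverse (\<mu> - b))"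
      by simp
    hence "w2 = rscale w1 (-(\<mu> - a) * inverse (\<mu> - b))" using ne by simp
    thus False using w2 unfolding dline_def by auto
  qed
  hence "rscale w1 (\<mu> - a) = 0" using eq by simp
  hence "\<mu> - a = 0" using w1 rscale_eq0 by blast
  thus ?thesis using mb by simp
qed

lemma scalar_lemma:
  fixes A :: "'d::real_div_algebra^'n \<Rightarrow> 'd^'n"
  assumes rl: "right_linear A" and inj: "inj A" and card: "CARD('n) \<ge> 2"
    and eig: "\<And>w. w \<noteq> 0 \<Longrightarrow> \<exists>c. A w = rscale w c"
  shows "proj_equiv A id"
proof -
  obtain i j :: 'n where ij: "i \<noteq> j"
  proof -
    have "\<not> (\<forall>i j::'n. i = j)"
    proof
      assume "\<forall>i j::'n. i = j"
      hence U: "UNIV = {undefined::'n}" by auto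
      have "CARD('n) = card {undefined::'n}" by (subst U) (rule refl)
      hence "CARD('n) = 1" by simp
      thus False using card by simp
    qed
    thus ?thesis using that by blast
  qed
  define ei where "ei = (axis i 1 :: 'd^'n)"
  define ej where "ej = (axis j 1 :: 'd^'n)"
  have ei0: "ei \<noteq> 0" unfolding ei_def by (simp add: vec_eq_iff axis_def) 
  have ej0: "ej \<noteq> 0" unfolding ej_def by (simp add: vec_eq_iff axis_def) 
  obtain c where c: "A ei = rscale ei c" using eig ei0 by blast
  obtain cj where cj: "A ej = rscale ej cj" using eig ej0 by blast
  have eji: "ej \<notin> dline ei"
  proof
    assume "ej \<in> dline ei"
    then obtain f where "ej = rscale ei f" unfolding dline_def by auto
    hence "ej $ j = ei $ j * f" by simp
    thus False using ij unfolding ei_def ej_def by (simp add: axis_def)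
  qed
  have ccj: "c = cj" using eig_equal[OF rl eig ei0 eji c cj] .
  have all: "A y = rscale y c" for y
  proof (cases "y = 0")
    case True thus ?thesis using rl_zero[OF rl] by simp
  next
    case False
    then obtain d where d: "A y = rscale y d" using eig by blast
    show ?thesis
    proof (cases "y \<in> dline ei")
      case False
      have "c = d" using eig_equal[OF rl eig ei0 False c d] .
      thus ?thesis using d by simp
    next
      case True
      then obtain e where e: "y = rscale ei e" unfolding dline_def by auto
      have "y \<notin> dline ej"
      proof
        assume "y \<in> dline ej"
        then obtain f where "y = rscale ej f" unfolding dline_def by auto
        hence "y $ i = 0" using ij unfolding ej_def by (simp add: axis_def)
        hence "e = 0" using e unfolding ei_def by (simp add: axis_def)
        thus False using e \<open>y \<noteq> 0\<close> by simp
      qed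
      have "cj = d" using eig_equal[OF rl eig ej0 \<open>y \<notin> dline ej\<close> cj d] .
      thus ?thesis using d ccj by simp
    qed
  qed
  have cen: "central_elem c" unfolding central_elem_def
  proof
    fix d
    have "A (rscale ei d) = rscale (A ei) d" using rl unfolding right_linear_def by blast
    hence "rscale ei (d * c) = rscale ei (c * d)" using all c by simp
    hence "(rscale ei (d * c)) $ i = (rscale ei (c * d)) $ i" by simp
    thus "c * d = d * c" unfolding ei_def by (simp add: axis_def)
  qed
  have "c \<noteq> 0"
  proof
    assume "c = 0"
    hence "A ei = A 0" using c rl_zero[OF rl] by simp
    thus False using inj ei0 by (simp add: inj_eq)
  qed
  thus ?thesis unfolding proj_equiv_def using cen all by auto
qed

lemma pe_comp:
  assumes "proj_equiv F f" "proj_equiv G g" "right_linear F"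
  shows "proj_equiv (F \<circ> G) (f \<circ> g)"
proof -
  obtain c where c: "c \<noteq> 0" "central_elem c" "\<And>v. F v = rscale (f v) c"
    using assms(1) unfolding proj_equiv_def by blast
  obtain d where d: "d \<noteq> 0" "central_elem d" "\<And>v. G v = rscale (g v) d"
    using assms(2) unfolding proj_equiv_def by blast
  have "(F \<circ> G) v = rscale ((f \<circ> g) v) (c * d)" for v
  proof -
    have "F (G v) = rscale (F (g v)) d" using d(3) assms(3) unfolding right_linear_def by metis
    thus ?thesis using c(3) by simp
  qed
  moreover have "c * d \<noteq> 0" using c d by simp
  moreover have "central_elem (c * d)" using c d central_mult by blast
  ultimately show ?thesis unfolding proj_equiv_def by blast
qed

lemma pe_trans:
  assumes "proj_equiv F G" "proj_equiv G K"
  shows "proj_equiv F K"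
proof -
  obtain c where c: "c \<noteq> 0" "central_elem c" "\<And>v. F v = rscale (G v) c"
    using assms(1) unfolding proj_equiv_def by blast
  obtain d where d: "d \<noteq> 0" "central_elem d" "\<And>v. G v = rscale (K v) d"
    using assms(2) unfolding proj_equiv_def by blast
  have "F v = rscale (K v) (d * c)" for v using c d by simp
  moreover have "d * c \<noteq> 0" using c d by simp
  moreover have "central_elem (d * c)" using c d central_mult by blast
  ultimately show ?thesis unfolding proj_equiv_def by blast
qed

lemma pe_props:
  assumes "proj_equiv F f" "F \<in> GLD"
  shows "right_linear f \<and> inj f"
proof -
  obtain c where c: "c \<noteq> 0" "central_elem c" "\<And>v. F v = rscale (f v) c"
    using assms(1) unfolding proj_equiv_def by blast
  have ic: "central_elem (inverse c)" using central_inverse c by blast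
  have fv: "f v = rscale (F v) (inverse c)" for v using c by simp
  have rlF: "right_linear F" "bij F" using assms(2) unfolding GLD_def by auto
  have "right_linear f" unfolding right_linear_def
  proof (intro conjI allI)
    fix v w show "f (v + w) = f v + f w" using rlF(1) unfolding fv right_linear_def
      by (simp add: rscale_add)
  next
    fix v d
    have "f (rscale v d) = rscale (F v) (d * inverse c)"
      using rlF(1) unfolding fv right_linear_def by simp
    also have "\<dots> = rscale (f v) d" using ic unfolding fv central_elem_def by simp
    finally show "f (rscale v d) = rscale (f v) d" .
  qed
  moreover have "inj f"
  proof
    fix x y assume "f x = f y"
    hence "F x = F y" using c(3) by simp
    thus "x = y" using rlF(2) by (simp add: bij_def inj_eq)
  qed
  ultimately show ?thesis by blast
qed

lemma transvection_id: "transvection id"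
  unfolding transvection_def
  by (rule exI[of _ 0], rule exI[of _ "\<lambda>_. 0"]) (simp add: fun_eq_iff)

theorem proposition3p13:
  fixes H :: "('h, 'm) monoid_scheme"
    and \<rho> :: "'h \<Rightarrow> ('d::real_div_algebra) ^ 'n \<Rightarrow> 'd ^ 'n"
    and h :: 'h and p :: "('d ^ 'n) set"
  assumes "\<exists>B::'d set. finite B \<and> span B = UNIV"
    and "CARD('n) \<ge> 2"
    and "group H"
    and "std_proj_rep H \<rho>"
    and "h \<in> carrier H"
    and "\<exists>y\<in>carrier H. h \<otimes>\<^bsub>H\<^esub> y \<noteq> y \<otimes>\<^bsub>H\<^esub> h"
    and "p \<in> proj_points"
  shows "proj_span {pact (\<rho> (x \<otimes>\<^bsub>H\<^esub> h \<otimes>\<^bsub>H\<^esub> inv\<^bsub>H\<^esub> x)) p | x. x \<in> carrier H} = proj_points"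
proof -
  interpret G: group H by fact
  note hC = assms(5)
  have GL: "\<And>x. x \<in> carrier H \<Longrightarrow> \<rho> x \<in> GLD"
    and hom: "\<And>x y. x \<in> carrier H \<Longrightarrow> y \<in> carrier H \<Longrightarrow> proj_equiv (\<rho> (x \<otimes>\<^bsub>H\<^esub> y)) (\<rho> x \<circ> \<rho> y)"
    and ker: "\<And>x. x \<in> carrier H \<Longrightarrow> proj_equiv (\<rho> x) id \<Longrightarrow> (\<forall>y\<in>carrier H. x \<otimes>\<^bsub>H\<^esub> y = y \<otimes>\<^bsub>H\<^esub> x)"
    and tr: "\<And>t. transvection t \<Longrightarrow> \<exists>x\<in>carrier H. proj_equiv (\<rho> x) t"
    using assms(4) unfolding std_proj_rep_def by blast+
  obtain v where v0: "v \<noteq> 0" and pv: "p = dline v" using assms(7) unfolding proj_points_def by blast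
  define A where "A = \<rho> h"
  have rlA: "right_linear A" and injA: "inj A" using GL[OF hC] unfolding A_def GLD_def
    by (auto simp: bij_def)
  define Q where "Q = {pact (\<rho> (x \<otimes>\<^bsub>H\<^esub> h \<otimes>\<^bsub>H\<^esub> inv\<^bsub>H\<^esub> x)) p | x. x \<in> carrier H}"
  define W where "W = dspan (\<Union>Q)"
  have subW: "right_submodule W" unfolding W_def by (rule dspan_submod)
  have QW: "\<Union>Q \<subseteq> W" unfolding W_def by (rule dspan_sub)
  define R where "R = {f. \<exists>x\<in>carrier H. proj_equiv (\<rho> x) f}"
  have Rprops: "right_linear f \<and> inj f" if "f \<in> R" for f
    using that pe_props GL unfolding R_def by blast
  have Rtr: "t \<in> R" if "transvection t" for t using tr[OF that] unfolding R_def by blast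
  have Rcomp: "t \<circ> f \<in> R" if tt: "transvection t" and fR: "f \<in> R" for t f
  proof -
    obtain xt where xt: "xt \<in> carrier H" "proj_equiv (\<rho> xt) t" using tr[OF tt] by blast
    obtain x where x: "x \<in> carrier H" "proj_equiv (\<rho> x) f" using fR unfolding R_def by blast
    have "proj_equiv (\<rho> xt \<circ> \<rho> x) (t \<circ> f)"
      using pe_comp[OF xt(2) x(2)] GL[OF xt(1)] unfolding GLD_def by blast
    hence "proj_equiv (\<rho> (xt \<otimes>\<^bsub>H\<^esub> x)) (t \<circ> f)" using pe_trans hom[OF xt(1) x(1)] by blast
    thus ?thesis unfolding R_def using xt(1) x(1) by blast
  qed
  have K: "f (A w) \<in> W" if fR: "f \<in> R" and fw: "f w = v" for f w
  proof -
    obtain x where x: "x \<in> carrier H" "proj_equiv (\<rho> x) f" using fR unfolding R_def by blast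
    obtain c where c: "c \<noteq> 0" "\<And>y. \<rho> x y = rscale (f y) c"
      using x(2) unfolding proj_equiv_def by blast
    define k where "k = x \<otimes>\<^bsub>H\<^esub> h \<otimes>\<^bsub>H\<^esub> inv\<^bsub>H\<^esub> x"
    have kC: "k \<in> carrier H" unfolding k_def using x(1) hC by simp
    have kx: "k \<otimes>\<^bsub>H\<^esub> x = x \<otimes>\<^bsub>H\<^esub> h" unfolding k_def using x(1) hC
      by (simp add: G.m_assoc)
    obtain c1 where c1: "c1 \<noteq> 0" "\<And>y. \<rho> (k \<otimes>\<^bsub>H\<^esub> x) y = rscale (\<rho> k (\<rho> x y)) c1"
      using hom[OF kC x(1)] unfolding proj_equiv_def by auto
    obtain c2 where c2: "c2 \<noteq> 0" "\<And>y. \<rho> (x \<otimes>\<^bsub>H\<^esub> h) y = rscale (\<rho> x (A y)) c2"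
      using hom[OF x(1) hC] unfolding proj_equiv_def A_def by auto
    have rlk: "right_linear (\<rho> k)" using GL[OF kC] unfolding GLD_def by blast
    have "\<rho> (k \<otimes>\<^bsub>H\<^esub> x) w = \<rho> (x \<otimes>\<^bsub>H\<^esub> h) w" using kx by simp
    hence e0: "rscale (\<rho> k (\<rho> x w)) c1 = rscale (\<rho> x (A w)) c2" by (simp only: c1(2) c2(2))
    have e2: "\<rho> k (rscale v c) = rscale (\<rho> k v) c" using rlk unfolding right_linear_def by blast
    from e0 have "rscale (rscale (\<rho> k v) c) c1 = rscale (rscale (f (A w)) c) c2"
      by (simp only: e2 c(2) fw)
    hence eq: "rscale (\<rho> k v) (c * c1) = rscale (f (A w)) (c * c2)" by (simp only: rscale_rscale)
    have vd: "v \<in> dline v" unfolding dline_def by (rule CollectI, rule exI[of _ 1], simp)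
    have "\<rho> k v \<in> pact (\<rho> k) p" unfolding pact_def pv using vd by (rule imageI)
    moreover have "pact (\<rho> k) p \<in> Q" unfolding Q_def k_def using x(1) by blast
    ultimately have "\<rho> k v \<in> W" using QW by blast
    hence "rscale (\<rho> k v) (c * c1) \<in> W" using subW unfolding right_submodule_def by blast
    hence "rscale (f (A w)) (c * c2) \<in> W" using eq by simp
    thus ?thesis using submod_scale_back[OF subW] c c2 by simp
  qed
  have WU: "W = UNIV"
  proof (cases "\<exists>f w. f \<in> R \<and> f w = v \<and> f (A w) \<notin> dline v")
    case True
    then obtain f w where fw: "f \<in> R" "f w = v" "f (A w) \<notin> dline v" by blast
    define z where "z = f (A w)"
    have zW: "z \<in> W" unfolding z_def using K fw by blast
    obtain \<phi> where add: "\<forall>a b. \<phi> (a+b) = \<phi> a + \<phi> b" and hom': "\<forall>a c. \<phi> (rscale a c) = \<phi> a * c"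
      and pv0: "\<phi> v = 0" and pz: "\<phi> z = 1"
      using func_exists[OF v0 fw(3)[folded z_def]] by blast
    have kerW: "u \<in> W" if "\<phi> u = 0" for u
    proof -
      define t where "t = (\<lambda>y. y + rscale u (\<phi> y))"
      have "transvection t" unfolding transvection_def t_def using add hom' that by blast
      hence "t \<circ> f \<in> R" using Rcomp fw(1) by blast
      moreover have "(t \<circ> f) w = v" using fw(2) pv0 unfolding t_def by simp
      ultimately have "(t \<circ> f) (A w) \<in> W" using K by blast
      hence "z + u \<in> W" unfolding t_def z_def using pz by (simp add: z_def[symmetric])
      hence "z + u - z \<in> W" using submod_diff[OF subW _ zW] by blast
      thus ?thesis by simp
    qed
    have "y \<in> W" for y :: "'d^'n"
    proof -
      have "\<phi> (y - rscale z (\<phi> y)) = \<phi> y - \<phi> z * \<phi> y"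
        using func_diff[OF add] hom' by simp
      hence "y - rscale z (\<phi> y) \<in> W" using kerW pz by simp
      moreover have "rscale z (\<phi> y) \<in> W" using zW subW unfolding right_submodule_def by blast
      ultimately have "y - rscale z (\<phi> y) + rscale z (\<phi> y) \<in> W"
        using subW unfolding right_submodule_def by blast
      thus "y \<in> W" by simp
    qed
    thus ?thesis by blast
  next
    case False
    hence F: "\<And>f w. f \<in> R \<Longrightarrow> f w = v \<Longrightarrow> f (A w) \<in> dline v" by blast
    have "\<exists>c. A w = rscale w c" if w0: "w \<noteq> 0" for w
    proof (cases "w \<in> dline v")
      case True
      then obtain d where d: "w = rscale v d" unfolding dline_def by auto
      have d0: "d \<noteq> 0" using d w0 by auto
      have "id \<in> R" using Rtr transvection_id by blast
      hence "A v \<in> dline v" using F[of id v] by simp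
      then obtain l where l: "A v = rscale v l" unfolding dline_def by auto
      have "A w = rscale (A v) d" using d rlA unfolding right_linear_def by blast
      also have "\<dots> = rscale v (l * d)" using l by simp
      also have "\<dots> = rscale w (inverse d * l * d)" using d d0 by (simp add: mult.assoc[symmetric])
      finally show ?thesis by blast
    next
      case False
      have vw: "v \<notin> dline w"
      proof
        assume "v \<in> dline w"
        then obtain e where e: "v = rscale w e" unfolding dline_def by auto
        hence "e \<noteq> 0" using v0 by auto
        hence "w = rscale v (inverse e)" using e by simp
        thus False using False unfolding dline_def by auto
      qed
      obtain \<phi>1 where a1: "\<forall>a b. \<phi>1 (a+b) = \<phi>1 a + \<phi>1 b" and h1: "\<forall>a c. \<phi>1 (rscale a c) = \<phi>1 a * c"
        and p1: "\<phi>1 w = 0" "\<phi>1 v = 1" using func_exists[OF w0 vw] by blast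
      obtain \<phi>2 where a2: "\<forall>a b. \<phi>2 (a+b) = \<phi>2 a + \<phi>2 b" and h2: "\<forall>a c. \<phi>2 (rscale a c) = \<phi>2 a * c"
        and p2: "\<phi>2 v = 0" "\<phi>2 w = 1" using func_exists[OF v0 False] by blast
      define \<phi> where "\<phi> = (\<lambda>y. \<phi>1 y + \<phi>2 y)"
      have add: "\<forall>a b. \<phi> (a+b) = \<phi> a + \<phi> b" unfolding \<phi>_def using a1 a2 by (simp add: algebra_simps)
      have hom': "\<forall>a c. \<phi> (rscale a c) = \<phi> a * c" unfolding \<phi>_def using h1 h2 by (simp add: algebra_simps)
      have pu: "\<phi> (v - w) = 0" using func_diff[OF add] p1 p2 unfolding \<phi>_def by simp
      define s where "s = (\<lambda>y. y + rscale (v - w) (\<phi> y))"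
      have "transvection s" unfolding transvection_def s_def using add hom' pu by blast
      hence sR: "s \<in> R" using Rtr by blast
      have sw: "s w = v" unfolding s_def \<phi>_def using p1 p2 by simp
      obtain \<mu> where mu: "s (A w) = rscale v \<mu>" using F[OF sR sw] unfolding dline_def by auto
      have "s (rscale w \<mu>) = rscale (s w) \<mu>" using Rprops[OF sR] unfolding right_linear_def by blast
      hence "s (A w) = s (rscale w \<mu>)" using mu sw by simp
      hence "A w = rscale w \<mu>" using Rprops[OF sR] by (simp add: inj_eq)
      thus ?thesis by blast
    qed
    hence "proj_equiv A id" using scalar_lemma[OF rlA injA assms(2)] by blast
    hence "\<forall>y\<in>carrier H. h \<otimes>\<^bsub>H\<^esub> y = y \<otimes>\<^bsub>H\<^esub> h" using ker[OF hC] unfolding A_def by blast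
    thus ?thesis using assms(6) by blast
  qed
  show ?thesis
    unfolding Q_def[symmetric] proj_span_def W_def[symmetric] WU by blast
qed

end
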